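(* Assume $A\ge \varepsilon^2/16$. Let $\phi^{-1},\phi^0\in\mathcal{G}_N$ with $\overline{\phi^{-1}}=\overline{\phi^0}$, and let $(\phi^k)_{k\ge -1}$ be generated by the scheme \[ \frac{\frac32\phi^{k+1}-2\phi^k+\frac12\phi^{k-1}}{\Delta t}=\Delta_N\mu_i^{k+1},\quad k\ge0, \] with either $i=1$ or $i=2$, where \[ \mu_1^{k+1}=-\nabla_N\cdot(|\nabla_N\phi^{k+1}|^2\nabla_N\phi^{k+1})+a\phi^{k+1}+2\Delta_N(2\phi^k-\phi^{k-1})-A\Delta t\,\Delta_N(\phi^{k+1}-\phi^k)+\Delta_N^2\phi^{k+1}, \] \[ \mu_2^{k+1}=-\nabla_N\cdot(|\nabla_N\phi^{k+1}|^2\nabla_N\phi^{k+1})-\varepsilon(2\phi^k-\phi^{k-1})-A\Delta t\,\Delta_N(\phi^{k+1}-\phi^k)+(1+\Delta_N)^2\phi^{k+1}. \] Define the modified energies \[ \mathcal{E}_{N,1}(\phi^{k+1},\phi^k)=E_N(\phi^{k+1})+\frac{1}{4\Delta t}\|\phi^{k+1}-\phi^k\|_{-1,N}^2+\|\nabla_N(\phi^{k+1}-\phi^k)\|_2^2, \] \[ \mathcal{E}_{N,2}(\phi^{k+1},\phi^k)=E_N(\phi^{k+1})+\frac{1}{4\Delta t}\|\phi^{k+1}-\phi^k\|_{-1,N}^2+\frac{\varepsilon}{2}\|\phi^{k+1}-\phi^k\|_2^2 . \] Then for $k\ge1$, the solution of scheme $i$ satisfies $\mathcal{E}_{N,i}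(\phi^{k+1},\phi^k)\le\mathcal{E}_{N,i}(\phi^k,\phi^{k-1})$.
   Context: Let $K\in\mathbb{N}$, $N=2K+1$, $h=1/N$, $\Omega=(0,1)^3$, grid points $(ih,jh,kh)$. $\mathcal{G}_N$ is the space of real grid functions on $\mathbb{Z}^3$ that are $N$-periodic in each index; $\langle f,g\rangle=h^3\sum_{i,j,k=0}^{N-1}f_{i,j,k}g_{i,j,k}$, $\|f\|_p=(h^3\sum|f_{i,j,k}|^p)^{1/p}$ (pointwise Euclidean norm for vector-valued grid functions), $\overline f=\langle f,1\rangle$, and $\mathring{\mathcal{G}}_N=\{f:\overline f=0\}$. Each $f\in\mathcal{G}_N$ has discrete Fourier expansion $f_{i,j,k}=\sum_{\ell,m,n=-K}^K\hat f_{\ell,m,n}\exp(2\pi\mathrm{i}(\ell x_i+my_j+nz_k))$; $\mathcal{D}_x$ multiplies coefficients by $2\pi\mathrm{i}\ell$ (similarly $\mathcal{D}_y,\mathcal{D}_z$), $\nabla_Nf=(\mathcal{D}_xf,\mathcal{D}_yf,\mathcal{D}_zf)$, $\nabla_N\cdot(f_1,f_2,f_3)=\mathcal{D}_xf_1+\mathcal{D}_yf_2+\mathcal{D}_zf_3$, $\Delta_N$ multiplies coefficients by $-4\pi^2(\ell^2+m^2+n^2)$; nonlinear products are pointwise. For $f\in\mathring{\mathcal{G}}_N$, $(-\Delta_N)^{-1}f$ is the zero-mean grid function with coefficients $\hat f_{\ell,m,n}/(4\pi^2(\ell^2+m^2+n^2))$ for $(\ell,m,n)\ne0$, and $\|f\|_{-1,N}=\langle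 f,(-\Delta_N)^{-1}f\rangle^{1/2}$. The discrete energy is $E_N(\phi)=\frac14\|\nabla_N\phi\|_4^4+\frac a2\|\phi\|_2^2-\|\nabla_N\phi\|_2^2+\frac12\|\Delta_N\phi\|_2^2$. Parameters: $\Delta t>0$, $0<\varepsilon<1$, $a=1-\varepsilon>0$, $A$ a constant. *)

theory Defs
  imports Complex_Main
begin

type_synonym grid = "int \<times> int \<times> int \<Rightarrow> real"

definition gN :: "nat \<Rightarrow> int" where "gN K = 2 * int K + 1"

definition hN :: "nat \<Rightarrow> real" where "hN K = 1 / real_of_int (gN K)"

definition periodic_grid :: "nat \<Rightarrow> grid \<Rightarrow> bool" where
  "periodic_grid K f \<longleftrightarrow> (\<forall>i j k.
      f (i + gN K, j, k) = f (i, j, k) \<and> f (i, j + gN K, k) = f (i, j, k) \<and>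
      f (i, j, k + gN K) = f (i, j, k))"

definition cell :: "nat \<Rightarrow> (int \<times> int \<times> int) set" where
  "cell K = {0..<gN K} \<times> {0..<gN K} \<times> {0..<gN K}"

definition freqs :: "nat \<Rightarrow> (int \<times> int \<times> int) set" where
  "freqs K = {-int K..int K} \<times> {-int K..int K} \<times> {-int K..int K}"

text \<open>Discrete Fourier coefficients: f_{ijk} = sum hat f_{lmn} exp(2 pi i (l x_i + m y_j + n z_k)).\<close>
definition dft_coeff :: "nat \<Rightarrow> grid \<Rightarrow> int \<times> int \<times> int \<Rightarrow> complex" where
  "dft_coeff K f = (\<lambda>(l, m, n). (\<Sum>(i, j, k)\<in>cell K.
      complex_of_real (f (i, j, k)) *
      exp (- 2 * complex_of_real pi * \<i> *
           complex_of_real (real_of_int (l * i + m * j + n * k) * hN K)))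
      / complex_of_real (real_of_int (gN K) ^ 3))"

definition spec_op :: "nat \<Rightarrow> (int \<times> int \<times> int \<Rightarrow> complex) \<Rightarrow> grid \<Rightarrow> grid" where
  "spec_op K \<sigma> f = (\<lambda>(i, j, k). Re (\<Sum>(l, m, n)\<in>freqs K.
      \<sigma> (l, m, n) * dft_coeff K f (l, m, n) *
      exp (2 * complex_of_real pi * \<i> *
           complex_of_real (real_of_int (l * i + m * j + n * k) * hN K))))"

definition Dx :: "nat \<Rightarrow> grid \<Rightarrow> grid" where
  "Dx K = spec_op K (\<lambda>(l, m, n). 2 * complex_of_real pi * \<i> * of_int l)"
definition Dy :: "nat \<Rightarrow> grid \<Rightarrow> grid" where
  "Dy K = spec_op K (\<lambda>(l, m, n). 2 * complex_of_real pi * \<i> * of_int m)"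
definition Dz :: "nat \<Rightarrow> grid \<Rightarrow> grid" where
  "Dz K = spec_op K (\<lambda>(l, m, n). 2 * complex_of_real pi * \<i> * of_int n)"

definition lapN :: "nat \<Rightarrow> grid \<Rightarrow> grid" where
  "lapN K = spec_op K (\<lambda>(l, m, n).
      complex_of_real (- 4 * pi ^ 2 * real_of_int (l ^ 2 + m ^ 2 + n ^ 2)))"

text \<open>(-Delta_N)^{-1} on zero-mean grid functions (zero mode set to 0).\<close>
definition invlapN :: "nat \<Rightarrow> grid \<Rightarrow> grid" where
  "invlapN K = spec_op K (\<lambda>(l, m, n).
      if (l, m, n) = (0, 0, 0) then 0
      else complex_of_real (1 / (4 * pi ^ 2 * real_of_int (l ^ 2 + m ^ 2 + n ^ 2))))"

definition gradN :: "nat \<Rightarrow> grid \<Rightarrow> grid \<times> grid \<times> grid" where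
  "gradN K f = (Dx K f, Dy K f, Dz K f)"

definition divN :: "nat \<Rightarrow> grid \<times> grid \<times> grid \<Rightarrow> grid" where
  "divN K F = (case F of (f1, f2, f3) \<Rightarrow> (\<lambda>p. Dx K f1 p + Dy K f2 p + Dz K f3 p))"

definition ipN :: "nat \<Rightarrow> grid \<Rightarrow> grid \<Rightarrow> real" where
  "ipN K f g = hN K ^ 3 * (\<Sum>p\<in>cell K. f p * g p)"

definition meanN :: "nat \<Rightarrow> grid \<Rightarrow> real" where
  "meanN K f = ipN K f (\<lambda>_. 1)"

definition normpN :: "nat \<Rightarrow> real \<Rightarrow> grid \<Rightarrow> real" where
  "normpN K p f = (hN K ^ 3 * (\<Sum>q\<in>cell K. \<bar>f q\<bar> powr p)) powr (1 / p)"

definition vnormpN :: "nat \<Rightarrow> real \<Rightarrow> grid \<times> grid \<times> grid \<Rightarrow> real" where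
  "vnormpN K p F = (case F of (f1, f2, f3) \<Rightarrow>
     (hN K ^ 3 * (\<Sum>q\<in>cell K. sqrt (f1 q ^ 2 + f2 q ^ 2 + f3 q ^ 2) powr p)) powr (1 / p))"

definition hm1normN :: "nat \<Rightarrow> grid \<Rightarrow> real" where
  "hm1normN K f = sqrt (ipN K f (invlapN K f))"

definition energyN :: "nat \<Rightarrow> real \<Rightarrow> grid \<Rightarrow> real" where
  "energyN K a \<phi> = 1/4 * vnormpN K 4 (gradN K \<phi>) ^ 4 + a / 2 * normpN K 2 \<phi> ^ 2
      - vnormpN K 2 (gradN K \<phi>) ^ 2 + 1/2 * normpN K 2 (lapN K \<phi>) ^ 2"

definition nonlin :: "nat \<Rightarrow> grid \<Rightarrow> grid \<times> grid \<times> grid" where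
  "nonlin K \<phi> = (let u = Dx K \<phi>; v = Dy K \<phi>; w = Dz K \<phi>;
      s = (\<lambda>p. u p ^ 2 + v p ^ 2 + w p ^ 2) in
      (\<lambda>p. s p * u p, \<lambda>p. s p * v p, \<lambda>p. s p * w p))"

text \<open>Chemical potentials of the two schemes; arguments: new, current, previous.\<close>
definition mu1 :: "nat \<Rightarrow> real \<Rightarrow> real \<Rightarrow> real \<Rightarrow> grid \<Rightarrow> grid \<Rightarrow> grid \<Rightarrow> grid" where
  "mu1 K a A dt pn pc pp = (\<lambda>q.
      - divN K (nonlin K pn) q + a * pn q
      + 2 * lapN K (\<lambda>r. 2 * pc r - pp r) q
      - A * dt * lapN K (\<lambda>r. pn r - pc r) q
      + lapN K (lapN K pn) q)"

definition mu2 :: "nat \<Rightarrow> real \<Rightarrow> real \<Rightarrow> real \<Rightarrow> grid \<Rightarrow> grid \<Rightarrow> grid \<Rightarrow> grid" where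
  "mu2 K \<epsilon> A dt pn pc pp = (\<lambda>q.
      - divN K (nonlin K pn) q - \<epsilon> * (2 * pc q - pp q)
      - A * dt * lapN K (\<lambda>r. pn r - pc r) q
      + (pn q + 2 * lapN K pn q + lapN K (lapN K pn) q))"

definition mod_energy1 :: "nat \<Rightarrow> real \<Rightarrow> real \<Rightarrow> grid \<Rightarrow> grid \<Rightarrow> real" where
  "mod_energy1 K a dt pn pc = energyN K a pn
     + 1 / (4 * dt) * hm1normN K (\<lambda>r. pn r - pc r) ^ 2
     + vnormpN K 2 (gradN K (\<lambda>r. pn r - pc r)) ^ 2"

definition mod_energy2 :: "nat \<Rightarrow> real \<Rightarrow> real \<Rightarrow> real \<Rightarrow> grid \<Rightarrow> grid \<Rightarrow> real" where
  "mod_energy2 K a \<epsilon> dt pn pc = energyN K a pn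
     + 1 / (4 * dt) * hm1normN K (\<lambda>r. pn r - pc r) ^ 2
     + \<epsilon> / 2 * normpN K 2 (\<lambda>r. pn r - pc r) ^ 2"

end

theory Submission
  imports Defs "HOL-Analysis.Complex_Transcendental"
begin

definition NN :: "nat \<Rightarrow> real" where "NN K = real_of_int (gN K)"

lemma gN_pos: "gN K > 0" by (simp add: gN_def)
lemma NN_pos: "NN K > 0" by (simp add: NN_def gN_def)
lemma hN_NN: "hN K = 1 / NN K" by (simp add: hN_def NN_def)

definition E :: "nat \<Rightarrow> int \<Rightarrow> complex" where
  "E K d = exp (2 * complex_of_real pi * \<i> * complex_of_real (real_of_int d * hN K))"

lemma E_add: "E K (a + b) = E K a * E K b"
  unfolding E_def by (simp add: distrib_right distrib_left exp_add[symmetric])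

lemma E_zero[simp]: "E K 0 = 1" by (simp add: E_def)

lemma E_neg: "E K (- a) = cnj (E K a)"
  unfolding E_def exp_cnj by simp

lemma E_eq_1: "E K d = 1 \<longleftrightarrow> gN K dvd d"
proof -
  have N: "NN K > 0" by (rule NN_pos)
  have "E K d = 1 \<longleftrightarrow> (\<exists>n::int. 2 * pi * (real_of_int d / NN K) = of_int (2 * n) * pi)"
    unfolding E_def exp_eq_1 by (simp add: hN_NN)
  also have "\<dots> \<longleftrightarrow> (\<exists>n::int. real_of_int d = of_int n * NN K)"
    using N pi_gt_zero by (auto simp: field_simps)
  also have "\<dots> \<longleftrightarrow> gN K dvd d"
    unfolding NN_def dvd_def by (metis of_int_eq_iff of_int_mult mult.commute)
  finally show ?thesis .
qed

lemma E_pow: "E K a ^ t = E K (a * int t)"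
  by (induction t) (simp_all add: E_add distrib_left mult.commute)

lemma orth1:
  "(\<Sum>i\<in>{a..<a + gN K}. E K (d * i)) = (if gN K dvd d then of_int (gN K) else 0)"
proof -
  have N: "gN K > 0" by (rule gN_pos)
  have "(\<Sum>i\<in>{a..<a + gN K}. E K (d * i)) = (\<Sum>t<nat (gN K). E K (d * (a + int t)))"
  proof -
    have "{a..<a + gN K} = (\<lambda>t. a + int t) ` {..<nat (gN K)}"
      proof (rule set_eqI, rule iffI)
      fix x assume "x \<in> {a..<a + gN K}"
      then show "x \<in> (\<lambda>t. a + int t) ` {..<nat (gN K)}"
        by (auto simp: image_iff intro!: bexI[of _ "nat (x - a)"])
    qed auto
    moreover have "inj_on (\<lambda>t. a + int t) {..<nat (gN K)}" by (auto simp: inj_on_def)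
    ultimately show ?thesis by (simp add: sum.reindex)
  qed
  also have "\<dots> = E K (d * a) * (\<Sum>t<nat (gN K). E K d ^ t)"
    by (simp add: sum_distrib_left E_pow distrib_left E_add)
  also have "\<dots> = (if gN K dvd d then of_int (gN K) else 0)"
  proof (cases "gN K dvd d")
    case True
    then obtain c where c: "d = gN K * c" by (auto simp: dvd_def)
    have "E K (d * a) = 1" using E_eq_1[of K "d*a"] c by simp
    moreover have "E K d = 1" using True E_eq_1 by blast
    ultimately show ?thesis using True N by simp
  next
    case False
    have ne: "E K d \<noteq> 1" using False E_eq_1 by blast
    have "E K d ^ nat (gN K) = 1" using E_eq_1[of K "d * int (nat (gN K))"] N
      by (simp add: E_pow)
    then have "(\<Sum>t<nat (gN K). E K d ^ t) = 0" using ne by (simp add: geometric_sum)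
    then show ?thesis using False by simp
  qed
  finally show ?thesis .
qed


definition dot :: "int \<times> int \<times> int \<Rightarrow> int \<times> int \<times> int \<Rightarrow> int" where
  "dot u v = fst u * fst v + fst (snd u) * fst (snd v) + snd (snd u) * snd (snd v)"

lemma dot_simp[simp]: "dot (l, m, n) (i, j, k) = l * i + m * j + n * k"
  by (simp add: dot_def)

lemma sum3:
  fixes g1 g2 g3 :: "int \<Rightarrow> complex"
  shows "(\<Sum>p\<in>A \<times> B \<times> C. g1 (fst p) * g2 (fst (snd p)) * g3 (snd (snd p)))
     = sum g1 A * sum g2 B * sum g3 C"
proof -
  have "(\<Sum>p\<in>A \<times> B \<times> C. g1 (fst p) * g2 (fst (snd p)) * g3 (snd (snd p)))
      = (\<Sum>x\<in>A. g1 x * (\<Sum>y\<in>B. g2 y * (\<Sum>z\<in>C. g3 z)))"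
    by (simp add: sum.cartesian_product' sum_distrib_left mult.assoc)
  also have "\<dots> = sum g1 A * sum g2 B * sum g3 C"
    by (simp add: sum_distrib_right mult.assoc)
  finally show ?thesis .
qed

lemma orth3:
  "(\<Sum>p\<in>{a1..<a1 + gN K} \<times> {a2..<a2 + gN K} \<times> {a3..<a3 + gN K}. E K (dot d p))
    = (if gN K dvd fst d then of_int (gN K) else 0) * (if gN K dvd fst (snd d) then of_int (gN K) else 0)
      * (if gN K dvd snd (snd d) then of_int (gN K) else 0)"
proof -
  have "(\<Sum>p\<in>{a1..<a1 + gN K} \<times> {a2..<a2 + gN K} \<times> {a3..<a3 + gN K}. E K (dot d p))
     = (\<Sum>p\<in>{a1..<a1 + gN K} \<times> {a2..<a2 + gN K} \<times> {a3..<a3 + gN K}.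
          E K (fst d * fst p) * E K (fst (snd d) * fst (snd p)) * E K (snd (snd d) * snd (snd p)))"
    by (simp add: dot_def E_add)
  also have "\<dots> = (\<Sum>i\<in>{a1..<a1 + gN K}. E K (fst d * i)) * (\<Sum>i\<in>{a2..<a2 + gN K}. E K (fst (snd d) * i))
       * (\<Sum>i\<in>{a3..<a3 + gN K}. E K (snd (snd d) * i))"
    by (rule sum3)
  finally show ?thesis by (simp only: orth1)
qed

lemma dvd_small: "\<bar>d\<bar> < gN K \<Longrightarrow> gN K dvd d \<longleftrightarrow> d = 0"
proof
  assume a: "\<bar>d\<bar> < gN K" "gN K dvd d"
  then obtain c where c: "d = gN K * c" by (auto simp: dvd_def)
  have "c = 0"
  proof (rule ccontr)
    assume "c \<noteq> 0"
    then have "\<bar>c\<bar> \<ge> 1" by simp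
    then have "\<bar>d\<bar> \<ge> gN K" using gN_pos[of K] by (simp add: c abs_mult mult_le_cancel_left1)
    then show False using a by simp
  qed
  then show "d = 0" using c by simp
qed simp

lemma cell_eq: "cell K = {0..<0 + gN K} \<times> {0..<0 + gN K} \<times> {0..<0 + gN K}"
  by (simp add: cell_def)

lemma freqs_eq: "freqs K = {- int K..<- int K + gN K} \<times> {- int K..<- int K + gN K} \<times> {- int K..<- int K + gN K}"
proof -
  have "{- int K..int K} = {- int K..<- int K + gN K}" by (auto simp: gN_def)
  then show ?thesis by (simp add: freqs_def)
qed

lemma finite_cell[simp]: "finite (cell K)" by (simp add: cell_def)
lemma finite_freqs[simp]: "finite (freqs K)" by (simp add: freqs_def)

lemma orth_cell:
  assumes "\<xi> \<in> freqs K" "\<eta> \<in> freqs K"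
  shows "(\<Sum>p\<in>cell K. E K (dot \<eta> p - dot \<xi> p)) = (if \<eta> = \<xi> then of_int (gN K) ^ 3 else 0)"
proof -
  obtain l m n where x: "\<xi> = (l, m, n)" by (cases \<xi>) auto
  obtain l' m' n' where y: "\<eta> = (l', m', n')" by (cases \<eta>) auto
  have b: "\<bar>l' - l\<bar> < gN K" "\<bar>m' - m\<bar> < gN K" "\<bar>n' - n\<bar> < gN K"
    using assms by (auto simp: x y freqs_def gN_def)
  have "(\<Sum>p\<in>cell K. E K (dot \<eta> p - dot \<xi> p)) = (\<Sum>p\<in>cell K. E K (dot (l'-l, m'-m, n'-n) p))"
    by (rule sum.cong) (auto simp: x y algebra_simps)
  also have "\<dots> = (if \<eta> = \<xi> then of_int (gN K) ^ 3 else 0)"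
    unfolding cell_eq orth3 using b by (simp add: dvd_small x y power3_eq_cube)
  finally show ?thesis .
qed

lemma orth_freq:
  assumes "p \<in> cell K" "q \<in> cell K"
  shows "(\<Sum>\<xi>\<in>freqs K. E K (dot \<xi> q - dot \<xi> p)) = (if p = q then of_int (gN K) ^ 3 else 0)"
proof -
  obtain l m n where x: "p = (l, m, n)" by (cases p) auto
  obtain l' m' n' where y: "q = (l', m', n')" by (cases q) auto
  have b: "\<bar>l' - l\<bar> < gN K" "\<bar>m' - m\<bar> < gN K" "\<bar>n' - n\<bar> < gN K"
    using assms by (auto simp: x y cell_def gN_def)
  have "(\<Sum>\<xi>\<in>freqs K. E K (dot \<xi> q - dot \<xi> p)) = (\<Sum>\<xi>\<in>freqs K. E K (dot (l'-l, m'-m, n'-n) \<xi>))"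
    by (rule sum.cong) (auto simp: x y algebra_simps dot_def)
  also have "\<dots> = (if p = q then of_int (gN K) ^ 3 else 0)"
    unfolding freqs_eq orth3 using b by (auto simp: dvd_small x y power3_eq_cube)
  finally show ?thesis .
qed


lemma cof_gN: "complex_of_int (gN K) = complex_of_real (NN K)" by (simp add: NN_def)

lemma NN_nz[simp]: "NN K \<noteq> 0" using NN_pos[of K] by simp

lemma NNc_nz[simp]: "complex_of_real (NN K) \<noteq> 0" using NN_pos[of K] by simp

lemma dft_alt: "dft_coeff K f \<xi> =
   (\<Sum>p\<in>cell K. complex_of_real (f p) * E K (- dot \<xi> p)) / complex_of_real (NN K) ^ 3"
proof -
  obtain l m n where x: "\<xi> = (l, m, n)" by (cases \<xi>) auto
  have "\<And>p. p \<in> cell K \<Longrightarrow> (case p of (i, j, k) \<Rightarrow> complex_of_real (f (i, j, k)) *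
      exp (- 2 * complex_of_real pi * \<i> * complex_of_real (real_of_int (l * i + m * j + n * k) * hN K)))
     = complex_of_real (f p) * E K (- dot \<xi> p)"
    by (auto simp: E_def x)
  then show ?thesis unfolding dft_coeff_def x
    by (simp add: NN_def cong: sum.cong)
qed

lemma spec_alt: "spec_op K \<sigma> f p =
   Re (\<Sum>\<eta>\<in>freqs K. \<sigma> \<eta> * dft_coeff K f \<eta> * E K (dot \<eta> p))"
proof -
  obtain i j k where x: "p = (i, j, k)" by (cases p) auto
  show ?thesis unfolding spec_op_def x
    by (simp add: E_def case_prod_beta' dot_def)
qed

lemma E_diff: "E K (- a) * E K b = E K (b - a)"
  by (simp add: E_add[symmetric])

lemma cnj_E: "cnj (E K a) = E K (- a)" by (simp add: E_neg)

lemma sum_delta_mult: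
  fixes F :: "'a \<Rightarrow> 'b::comm_ring_1"
  assumes "finite A"
  shows "(\<Sum>p\<in>A. F p * (if p = q then c else 0)) = (if q \<in> A then F q * c else 0)"
proof -
  have "(\<lambda>p. F p * (if p = q then c else 0)) = (\<lambda>p. if p = q then F q * c else 0)" by auto
  then show ?thesis unfolding \<open>(\<lambda>p. F p * (if p = q then c else 0)) = _\<close> using assms by (simp add: sum.delta)
qed

lemma parseval: "(\<Sum>\<xi>\<in>freqs K. dft_coeff K f \<xi> * cnj (dft_coeff K g \<xi>)) = complex_of_real (ipN K f g)"
proof -
  let ?c = "complex_of_real (NN K) ^ 3"
  have "(\<Sum>\<xi>\<in>freqs K. dft_coeff K f \<xi> * cnj (dft_coeff K g \<xi>))
      = (\<Sum>\<xi>\<in>freqs K. (\<Sum>q\<in>cell K. \<Sum>p\<in>cell K. complex_of_real (f p * g q) * E K (dot \<xi> q - dot \<xi> p)) / (?c * ?c))"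
  proof (rule sum.cong[OF refl])
    fix \<xi>
    show "dft_coeff K f \<xi> * cnj (dft_coeff K g \<xi>) =
        (\<Sum>q\<in>cell K. \<Sum>p\<in>cell K. complex_of_real (f p * g q) * E K (dot \<xi> q - dot \<xi> p)) / (?c * ?c)"
      unfolding dft_alt by (simp add: sum_product cnj_E E_add[symmetric] algebra_simps)
  qed
  also have "\<dots> = (\<Sum>q\<in>cell K. \<Sum>p\<in>cell K. complex_of_real (f p * g q) * (\<Sum>\<xi>\<in>freqs K. E K (dot \<xi> q - dot \<xi> p))) / (?c * ?c)"
    by (simp add: sum_divide_distrib[symmetric] sum_distrib_left sum.swap[of _ "freqs K"])
  also have "\<dots> = (\<Sum>q\<in>cell K. \<Sum>p\<in>cell K. complex_of_real (f p * g q) * (if p = q then ?c else 0)) / (?c * ?c)"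
    by (simp add: orth_freq[unfolded cof_gN] cong: sum.cong)
  also have "\<dots> = (\<Sum>p\<in>cell K. complex_of_real (f p * g p)) / ?c"
    by (simp add: sum_delta_mult sum_divide_distrib power3_eq_cube)
  also have "\<dots> = complex_of_real (ipN K f g)"
    by (simp add: ipN_def hN_NN field_simps)
  finally show ?thesis .
qed


definition neg3 :: "int \<times> int \<times> int \<Rightarrow> int \<times> int \<times> int" where
  "neg3 \<xi> = (- fst \<xi>, - fst (snd \<xi>), - snd (snd \<xi>))"

definition herm :: "nat \<Rightarrow> (int \<times> int \<times> int \<Rightarrow> complex) \<Rightarrow> bool" where
  "herm K \<sigma> \<longleftrightarrow> (\<forall>\<xi>\<in>freqs K. \<sigma> (neg3 \<xi>) = cnj (\<sigma> \<xi>))"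

lemma neg3_simp[simp]: "neg3 (l, m, n) = (-l, -m, -n)" by (simp add: neg3_def)
lemma dot_neg3[simp]: "dot (neg3 \<eta>) p = - dot \<eta> p" by (simp add: neg3_def dot_def)
lemma neg3_neg3[simp]: "neg3 (neg3 \<eta>) = \<eta>" by (simp add: neg3_def)
lemma neg3_freqs: "\<eta> \<in> freqs K \<Longrightarrow> neg3 \<eta> \<in> freqs K" by (auto simp: neg3_def freqs_def)

lemma cnj_dft: "cnj (dft_coeff K f \<eta>) = dft_coeff K f (neg3 \<eta>)"
  unfolding dft_alt by (simp add: cnj_E)

lemma sum_neg3: "(\<Sum>\<eta>\<in>freqs K. F \<eta>) = (\<Sum>\<eta>\<in>freqs K. F (neg3 \<eta>))"
  by (rule sum.reindex_bij_witness[of _ neg3 neg3]) (auto simp: neg3_freqs)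

lemma real_of_cnj: "cnj z = z \<Longrightarrow> complex_of_real (Re z) = z"
  by (simp add: complex_eq_iff)

lemma spec_real:
  assumes "herm K \<sigma>"
  shows "complex_of_real (spec_op K \<sigma> f p) = (\<Sum>\<eta>\<in>freqs K. \<sigma> \<eta> * dft_coeff K f \<eta> * E K (dot \<eta> p))"
proof -
  let ?S = "(\<Sum>\<eta>\<in>freqs K. \<sigma> \<eta> * dft_coeff K f \<eta> * E K (dot \<eta> p))"
  have "cnj ?S = (\<Sum>\<eta>\<in>freqs K. \<sigma> (neg3 \<eta>) * dft_coeff K f (neg3 \<eta>) * E K (dot (neg3 \<eta>) p))"
    using assms by (simp add: herm_def cnj_dft cnj_E cong: sum.cong)
  also have "\<dots> = ?S" by (rule sum_neg3[symmetric])
  finally show ?thesis unfolding spec_alt by (rule real_of_cnj)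
qed

lemma dft_spec:
  assumes "herm K \<sigma>" "\<xi> \<in> freqs K"
  shows "dft_coeff K (spec_op K \<sigma> f) \<xi> = \<sigma> \<xi> * dft_coeff K f \<xi>"
proof -
  let ?c = "complex_of_real (NN K) ^ 3"
  have "dft_coeff K (spec_op K \<sigma> f) \<xi>
      = (\<Sum>p\<in>cell K. \<Sum>\<eta>\<in>freqs K. \<sigma> \<eta> * dft_coeff K f \<eta> * E K (dot \<eta> p - dot \<xi> p)) / ?c"
    unfolding dft_alt[of K "spec_op K \<sigma> f"] spec_real[OF assms(1)]
    by (simp add: sum_distrib_right sum_distrib_left E_diff[symmetric]) (auto simp: ac_simps intro!: sum.cong)
  also have "\<dots> = (\<Sum>\<eta>\<in>freqs K. \<sigma> \<eta> * dft_coeff K f \<eta> * (\<Sum>p\<in>cell K. E K (dot \<eta> p - dot \<xi> p))) / ?c"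
    by (simp add: sum_distrib_left sum.swap[of _ "cell K"])
  also have "\<dots> = (\<Sum>\<eta>\<in>freqs K. \<sigma> \<eta> * dft_coeff K f \<eta> * (if \<eta> = \<xi> then ?c else 0)) / ?c"
    using assms(2) by (simp add: orth_cell[unfolded cof_gN] cong: sum.cong)
  also have "\<dots> = \<sigma> \<xi> * dft_coeff K f \<xi>"
    using assms(2) by (simp add: sum_delta_mult)
  finally show ?thesis .
qed


lemma dft_add: "dft_coeff K (\<lambda>q. f q + g q) \<xi> = dft_coeff K f \<xi> + dft_coeff K g \<xi>"
  unfolding dft_alt by (simp add: distrib_right sum.distrib add_divide_distrib)
lemma dft_diff: "dft_coeff K (\<lambda>q. f q - g q) \<xi> = dft_coeff K f \<xi> - dft_coeff K g \<xi>"
  unfolding dft_alt by (simp add: left_diff_distrib sum_subtractf diff_divide_distrib)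
lemma dft_uminus: "dft_coeff K (\<lambda>q. - f q) \<xi> = - dft_coeff K f \<xi>"
  unfolding dft_alt by (simp add: sum_negf)
lemma dft_cmult: "dft_coeff K (\<lambda>q. c * f q) \<xi> = complex_of_real c * dft_coeff K f \<xi>"
  unfolding dft_alt by (simp add: sum_distrib_left mult.assoc)
lemma dft_divide: "dft_coeff K (\<lambda>q. f q / c) \<xi> = dft_coeff K f \<xi> / complex_of_real c"
  unfolding dft_alt by (simp add: sum_divide_distrib field_simps)

lemmas dft_lin = dft_add dft_diff dft_uminus dft_cmult dft_divide

lemma herm_Dx: "herm K (\<lambda>(l, m, n). 2 * complex_of_real pi * \<i> * of_int l)"
  unfolding herm_def by (auto simp: neg3_def)
lemma herm_Dy: "herm K (\<lambda>(l, m, n). 2 * complex_of_real pi * \<i> * of_int m)"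
  unfolding herm_def by (auto simp: neg3_def)
lemma herm_Dz: "herm K (\<lambda>(l, m, n). 2 * complex_of_real pi * \<i> * of_int n)"
  unfolding herm_def by (auto simp: neg3_def)
lemma herm_lap: "herm K (\<lambda>(l, m, n). complex_of_real (- 4 * pi ^ 2 * real_of_int (l ^ 2 + m ^ 2 + n ^ 2)))"
  unfolding herm_def by (auto simp: neg3_def)
lemma herm_inv: "herm K (\<lambda>(l, m, n).
      if (l, m, n) = (0, 0, 0) then 0
      else complex_of_real (1 / (4 * pi ^ 2 * real_of_int (l ^ 2 + m ^ 2 + n ^ 2))))"
  unfolding herm_def by (auto simp: neg3_def)

lemma dft_Dx: "(l, m, n) \<in> freqs K \<Longrightarrow> dft_coeff K (Dx K f) (l, m, n) = 2 * complex_of_real pi * \<i> * of_int l * dft_coeff K f (l, m, n)"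
  unfolding Dx_def by (subst dft_spec[OF herm_Dx]) auto
lemma dft_Dy: "(l, m, n) \<in> freqs K \<Longrightarrow> dft_coeff K (Dy K f) (l, m, n) = 2 * complex_of_real pi * \<i> * of_int m * dft_coeff K f (l, m, n)"
  unfolding Dy_def by (subst dft_spec[OF herm_Dy]) auto
lemma dft_Dz: "(l, m, n) \<in> freqs K \<Longrightarrow> dft_coeff K (Dz K f) (l, m, n) = 2 * complex_of_real pi * \<i> * of_int n * dft_coeff K f (l, m, n)"
  unfolding Dz_def by (subst dft_spec[OF herm_Dz]) auto
lemma dft_lap: "(l, m, n) \<in> freqs K \<Longrightarrow> dft_coeff K (lapN K f) (l, m, n) = complex_of_real (- 4 * pi ^ 2 * real_of_int (l ^ 2 + m ^ 2 + n ^ 2)) * dft_coeff K f (l, m, n)"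
  unfolding lapN_def by (subst dft_spec[OF herm_lap]) auto
lemma dft_inv: "(l, m, n) \<in> freqs K \<Longrightarrow> dft_coeff K (invlapN K f) (l, m, n) =
   (if (l, m, n) = (0, 0, 0) then 0 else complex_of_real (1 / (4 * pi ^ 2 * real_of_int (l ^ 2 + m ^ 2 + n ^ 2)))) * dft_coeff K f (l, m, n)"
  unfolding invlapN_def by (subst dft_spec[OF herm_inv]) auto

lemma parseval_re: "ipN K f g = (\<Sum>\<xi>\<in>freqs K. Re (dft_coeff K f \<xi> * cnj (dft_coeff K g \<xi>)))"
proof -
  have "ipN K f g = Re (complex_of_real (ipN K f g))" by simp
  also have "\<dots> = (\<Sum>\<xi>\<in>freqs K. Re (dft_coeff K f \<xi> * cnj (dft_coeff K g \<xi>)))"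
    unfolding parseval[symmetric] by (simp add: Re_sum)
  finally show ?thesis .
qed

lemma normsq: "ipN K f f = (\<Sum>\<xi>\<in>freqs K. (cmod (dft_coeff K f \<xi>))\<^sup>2)"
  unfolding parseval_re by (simp add: complex_mult_cnj cmod_def)

lemma norm2_sq: "normpN K 2 f ^ 2 = ipN K f f"
proof -
  have "(\<Sum>q\<in>cell K. \<bar>f q\<bar> powr 2) = (\<Sum>q\<in>cell K. f q * f q)"
    by (simp add: power2_eq_square)
  moreover have "0 \<le> hN K ^ 3 * (\<Sum>q\<in>cell K. f q * f q)"
    by (simp add: hN_def gN_def sum_nonneg)
  ultimately show ?thesis unfolding normpN_def ipN_def
    by (simp add: powr_half_sqrt)
qed

lemma pow_root4: "0 \<le> (S::real) \<Longrightarrow> (S powr (1/4)) ^ 4 = S"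
proof -
  assume "0 \<le> S"
  have "(S powr (1/4)) ^ 4 = (S powr (1/4)) powr 4" by (subst powr_numeral) auto
  also have "\<dots> = S" using \<open>0 \<le> S\<close> by (simp add: powr_powr)
  finally show ?thesis .
qed

lemma ipN_self_nonneg: "0 \<le> ipN K f f"
  unfolding ipN_def by (simp add: hN_def gN_def sum_nonneg)

lemma pow_root2: "0 \<le> (S::real) \<Longrightarrow> (S powr (1/2)) ^ 2 = S"
  by (simp add: powr_half_sqrt)

lemma vnorm2_sq: "vnormpN K 2 (f1, f2, f3) ^ 2 = ipN K f1 f1 + ipN K f2 f2 + ipN K f3 f3"
proof -
  have eqS: "hN K ^ 3 * (\<Sum>q\<in>cell K. sqrt (f1 q ^ 2 + f2 q ^ 2 + f3 q ^ 2) powr 2) = ipN K f1 f1 + ipN K f2 f2 + ipN K f3 f3"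
    by (simp add: ipN_def power2_eq_square sum.distrib distrib_left)
  have "0 \<le> ipN K f1 f1 + ipN K f2 f2 + ipN K f3 f3" by (simp add: ipN_self_nonneg)
  then show ?thesis unfolding vnormpN_def by (simp only: prod.case eqS pow_root2)
qed

lemma vnorm4: "vnormpN K 4 (f1, f2, f3) ^ 4 = hN K ^ 3 * (\<Sum>q\<in>cell K. (f1 q ^ 2 + f2 q ^ 2 + f3 q ^ 2)\<^sup>2)"
proof -
  have "(\<Sum>q\<in>cell K. sqrt (f1 q ^ 2 + f2 q ^ 2 + f3 q ^ 2) powr 4) = (\<Sum>q\<in>cell K. (f1 q ^ 2 + f2 q ^ 2 + f3 q ^ 2)\<^sup>2)"
  proof (rule sum.cong[OF refl])
    fix q
    have "sqrt (f1 q ^ 2 + f2 q ^ 2 + f3 q ^ 2) powr 4 = sqrt (f1 q ^ 2 + f2 q ^ 2 + f3 q ^ 2) ^ 4"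
      by (subst powr_numeral) auto
    also have "\<dots> = (f1 q ^ 2 + f2 q ^ 2 + f3 q ^ 2)\<^sup>2"
    proof -
      let ?s = "f1 q ^ 2 + f2 q ^ 2 + f3 q ^ 2"
      have "sqrt ?s ^ 4 = (sqrt ?s ^ 2) ^ 2" unfolding power_mult[symmetric] by simp
      also have "\<dots> = ?s ^ 2" by simp
      finally show ?thesis .
    qed
    finally show "sqrt (f1 q ^ 2 + f2 q ^ 2 + f3 q ^ 2) powr 4 = (f1 q ^ 2 + f2 q ^ 2 + f3 q ^ 2)\<^sup>2" .
  qed
  moreover have "0 \<le> hN K ^ 3 * (\<Sum>q\<in>cell K. (f1 q ^ 2 + f2 q ^ 2 + f3 q ^ 2)\<^sup>2)"
    by (simp add: hN_def gN_def sum_nonneg)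
  ultimately show ?thesis unfolding vnormpN_def
    by (simp add: pow_root4)
qed


lemma mode1_real:
  fixes x y z w lam dt A a :: real
  assumes lam: "lam \<ge> 2" and dt: "dt > 0" and A: "A \<ge> 0" and a: "a \<ge> 0"
    and eq: "(3/2*x - 2*y + 1/2*z)/dt = -lam * (w + a*x - 2*lam*(2*y - z) + A*dt*lam*(x-y) + lam*lam*x)"
  shows "a/2*(x^2-y^2) - lam*(x^2-y^2) + lam^2/2*(x^2-y^2) + 1/(4*dt)*(1/lam)*((x-y)^2-(y-z)^2)
         + lam*((x-y)^2-(y-z)^2) + w*(x-y) \<le> 0"
proof -
  define d where "d = x - y"
  define d0 where "d0 = y - z"
  have lp: "lam > 0" using lam by simp
  have w: "w = -(a*x - 2*lam*(2*y - z) + A*dt*lam*(x-y) + lam*lam*x) - (3/2*x - 2*y + 1/2*z)/(dt*lam)"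
    using eq lp dt by (simp add: field_simps)
  have "a/2*(x^2-y^2) - lam*(x^2-y^2) + lam^2/2*(x^2-y^2) + 1/(4*dt)*(1/lam)*((x-y)^2-(y-z)^2)
         + lam*((x-y)^2-(y-z)^2) + w*(x-y)
      = -a/2*d^2 - (lam^2/2 - lam)*d^2 - A*dt*lam*d^2 - lam*(d-d0)^2 - (d^2 + (d-d0)^2/4)/(dt*lam)"
    unfolding w d_def d0_def using lp dt by (simp add: field_simps) (simp add: algebra_simps power2_eq_square)
  also have "\<dots> \<le> 0"
  proof -
    have e1: "lam^2/2 - lam = lam*(lam-2)/2" by (simp add: power2_eq_square algebra_simps)
    have "lam*(lam-2) \<ge> 0" using lam by simp
    then have "lam^2/2 - lam \<ge> 0" unfolding e1 by simp
    then have "(lam^2/2 - lam)*d^2 \<ge> 0" by simp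
    moreover have "A*dt*lam*d^2 \<ge> 0" using A dt lp by simp
    moreover have "(d^2 + (d-d0)^2/4)/(dt*lam) \<ge> 0" using dt lp by simp
    moreover have "a/2*d^2 \<ge> 0" using a by simp
    moreover have "lam*(d-d0)^2 \<ge> 0" using lp by simp
    ultimately show ?thesis by linarith
  qed
  finally show ?thesis .
qed

lemma mode2_real:
  fixes x y z w lam dt A a \<epsilon> :: real
  assumes lam: "lam > 0" and dt: "dt > 0" and A: "A \<ge> \<epsilon>^2/16" and e: "\<epsilon> > 0" and a: "a = 1 - \<epsilon>"
    and eq: "(3/2*x - 2*y + 1/2*z)/dt = -lam * (w - \<epsilon>*(2*y - z) + A*dt*lam*(x-y) + (1-lam)^2*x)"
  shows "a/2*(x^2-y^2) - lam*(x^2-y^2) + lam^2/2*(x^2-y^2) + 1/(4*dt)*(1/lam)*((x-y)^2-(y-z)^2)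
         + \<epsilon>/2*((x-y)^2-(y-z)^2) + w*(x-y) \<le> 0"
proof -
  define d where "d = x - y"
  define d0 where "d0 = y - z"
  define t where "t = dt * lam"
  have tp: "t > 0" using lam dt by (simp add: t_def)
  have w: "w = -(- \<epsilon>*(2*y - z) + A*dt*lam*(x-y) + (1-lam)^2*x) - (3/2*x - 2*y + 1/2*z)/(dt*lam)"
    using eq lam dt by (simp add: field_simps)
  have "a/2*(x^2-y^2) - lam*(x^2-y^2) + lam^2/2*(x^2-y^2) + 1/(4*dt)*(1/lam)*((x-y)^2-(y-z)^2)
         + \<epsilon>/2*((x-y)^2-(y-z)^2) + w*(x-y)
      = - ((1-lam)^2/2*d^2) - \<epsilon>/2*(d-d0)^2 - (d-d0)^2/(4*t) - (A*t + 1/t - \<epsilon>/2)*d^2"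
    unfolding w d_def d0_def t_def a using lam dt by (simp add: field_simps) (simp add: algebra_simps power2_eq_square)
  also have "\<dots> \<le> 0"
  proof -
    have "A*t*t - \<epsilon>/2*t + 1 \<ge> 0"
    proof -
      have "A*t*t \<ge> \<epsilon>^2/16*t*t" using A tp by (simp add: mult_right_mono)
      moreover have "\<epsilon>^2/16*t*t - \<epsilon>/2*t + 1 = (\<epsilon>*t/4 - 1)^2" by (simp add: power2_eq_square field_simps)
      ultimately show ?thesis by (smt (verit) zero_le_power2)
    qed
    then have "(A*t*t - \<epsilon>/2*t + 1)/t \<ge> 0" using tp by simp
    moreover have "(A*t*t - \<epsilon>/2*t + 1)/t = A*t + 1/t - \<epsilon>/2" using tp by (simp add: field_simps)
    ultimately have "(A*t + 1/t - \<epsilon>/2)*d^2 \<ge> 0" by simp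
    moreover have "\<epsilon>/2*(d-d0)^2 \<ge> 0" using e by simp
    moreover have "(d-d0)^2/(4*t) \<ge> 0" using tp by simp
    moreover have "(1-lam)^2/2*d^2 \<ge> 0" by simp
    ultimately show ?thesis by linarith
  qed
  finally show ?thesis .
qed


definition lam :: "int \<times> int \<times> int \<Rightarrow> real" where
  "lam \<xi> = 4 * pi ^ 2 * real_of_int (fst \<xi> ^ 2 + fst (snd \<xi>) ^ 2 + snd (snd \<xi>) ^ 2)"
definition iota :: "int \<times> int \<times> int \<Rightarrow> real" where
  "iota \<xi> = (if \<xi> = (0, 0, 0) then 0 else 1 / lam \<xi>)"

lemma lam_simp: "lam (l, m, n) = 4 * pi ^ 2 * real_of_int (l ^ 2 + m ^ 2 + n ^ 2)"
  by (simp add: lam_def)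

lemma sum_cong3: "(\<And>l m n. (l, m, n) \<in> freqs K \<Longrightarrow> f (l, m, n) = g (l, m, n)) \<Longrightarrow> sum f (freqs K) = sum g (freqs K)"
  by (rule sum.cong) auto

lemma cmod_Dsym: "(cmod (2 * complex_of_real pi * \<i> * of_int l * z))^2 = 4 * pi^2 * real_of_int (l^2) * (cmod z)^2"
  by (simp add: norm_mult power_mult_distrib)

lemma norm_sq_fourier: "normpN K 2 f ^ 2 = (\<Sum>\<xi>\<in>freqs K. (cmod (dft_coeff K f \<xi>))\<^sup>2)"
  by (simp add: norm2_sq normsq)

lemma grad_sq_fourier: "vnormpN K 2 (gradN K f) ^ 2 = (\<Sum>\<xi>\<in>freqs K. lam \<xi> * (cmod (dft_coeff K f \<xi>))\<^sup>2)"
proof -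
  have "vnormpN K 2 (gradN K f) ^ 2 = (\<Sum>\<xi>\<in>freqs K. (cmod (dft_coeff K (Dx K f) \<xi>))\<^sup>2 + (cmod (dft_coeff K (Dy K f) \<xi>))\<^sup>2 + (cmod (dft_coeff K (Dz K f) \<xi>))\<^sup>2)"
    by (simp add: gradN_def vnorm2_sq normsq sum.distrib)
  also have "\<dots> = (\<Sum>\<xi>\<in>freqs K. lam \<xi> * (cmod (dft_coeff K f \<xi>))\<^sup>2)"
    by (rule sum_cong3) (simp only: dft_Dx dft_Dy dft_Dz cmod_Dsym, simp add: lam_simp algebra_simps)
  finally show ?thesis .
qed

lemma lap_sq_fourier: "normpN K 2 (lapN K f) ^ 2 = (\<Sum>\<xi>\<in>freqs K. (lam \<xi>)^2 * (cmod (dft_coeff K f \<xi>))\<^sup>2)"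
proof -
  have "normpN K 2 (lapN K f) ^ 2 = (\<Sum>\<xi>\<in>freqs K. (cmod (dft_coeff K (lapN K f) \<xi>))\<^sup>2)"
    by (simp add: norm2_sq normsq)
  also have "\<dots> = (\<Sum>\<xi>\<in>freqs K. (lam \<xi>)^2 * (cmod (dft_coeff K f \<xi>))\<^sup>2)"
    by (rule sum_cong3) (simp only: dft_lap norm_mult norm_of_real power_mult_distrib power2_abs, simp add: lam_simp power_mult_distrib)
  finally show ?thesis .
qed

lemma hm1_sq_fourier: "hm1normN K f ^ 2 = (\<Sum>\<xi>\<in>freqs K. iota \<xi> * (cmod (dft_coeff K f \<xi>))\<^sup>2)"
proof -
  have e: "ipN K f (invlapN K f) = (\<Sum>\<xi>\<in>freqs K. iota \<xi> * (cmod (dft_coeff K f \<xi>))\<^sup>2)"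
    unfolding parseval_re
  proof (rule sum_cong3)
    fix l m n assume "(l, m, n) \<in> freqs K"
    then show "Re (dft_coeff K f (l, m, n) * cnj (dft_coeff K (invlapN K f) (l, m, n))) =
          iota (l, m, n) * (cmod (dft_coeff K f (l, m, n)))\<^sup>2"
      by (simp add: dft_inv iota_def lam_simp complex_mult_cnj cmod_def power2_eq_square algebra_simps)
  qed
  have "0 \<le> (\<Sum>\<xi>\<in>freqs K. iota \<xi> * (cmod (dft_coeff K f \<xi>))\<^sup>2)"
    by (rule sum_nonneg) (simp add: iota_def lam_def)
  then show ?thesis unfolding hm1normN_def e by simp
qed

lemma dft_zero_mean: "dft_coeff K f (0, 0, 0) = complex_of_real (meanN K f)"
  unfolding dft_alt meanN_def ipN_def by (simp add: hN_NN field_simps dot_def)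


lemma quartic_pw:
  fixes u1 v1 w1 u0 v0 w0 :: real
  shows "(u1^2+v1^2+w1^2)^2/4 - (u0^2+v0^2+w0^2)^2/4 \<le> (u1^2+v1^2+w1^2) * (u1 * (u1-u0) + v1 * (v1-v0) + w1 * (w1-w0))"
proof -
  define s1 where "s1 = u1^2+v1^2+w1^2"
  define s0 where "s0 = u0^2+v0^2+w0^2"
  define r where "r = u1 * u0 + v1 * v0 + w1 * w0"
  have s1: "s1 \<ge> 0" by (simp add: s1_def)
  have "2*r \<le> s1 + s0"
  proof -
    have "0 \<le> (u1-u0)^2+(v1-v0)^2+(w1-w0)^2" by simp
    then show ?thesis by (simp add: r_def s1_def s0_def power2_eq_square algebra_simps)
  qed
  then have "s1 * (2 * r) \<le> s1 * (s1 + s0)" using s1 by (rule mult_left_mono)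
  moreover have "(u1^2+v1^2+w1^2) * (u1 * (u1-u0) + v1 * (v1-v0) + w1 * (w1-w0)) = s1 * s1 - s1 * r"
    by (simp add: s1_def r_def power2_eq_square algebra_simps)
  moreover have "0 \<le> (s1 - s0)^2" by simp
  ultimately show ?thesis unfolding s1_def[symmetric] s0_def[symmetric]
    by (simp add: power2_eq_square algebra_simps)
qed

lemma cnj_skew: "cnj a = - a \<Longrightarrow> Re (n * cnj (a * X)) - Re (n * cnj (a * Y)) = Re (- (a * n) * cnj (X - Y))"
  by (simp add: algebra_simps)

lemma cnj_Dsym: "cnj (2 * complex_of_real pi * \<i> * of_int l) = - (2 * complex_of_real pi * \<i> * of_int l)"
  by simp

lemma nonlin_bound:
  "1/4 * vnormpN K 4 (gradN K P) ^ 4 - 1/4 * vnormpN K 4 (gradN K C) ^ 4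
   \<le> (\<Sum>\<xi>\<in>freqs K. Re (- dft_coeff K (divN K (nonlin K P)) \<xi> * cnj (dft_coeff K P \<xi> - dft_coeff K C \<xi>)))"
proof -
  define u1 where "u1 = Dx K P"
  define v1 where "v1 = Dy K P"
  define w1 where "w1 = Dz K P"
  define u0 where "u0 = Dx K C"
  define v0 where "v0 = Dy K C"
  define w0 where "w0 = Dz K C"
  define s where "s = (\<lambda>q. u1 q ^ 2 + v1 q ^ 2 + w1 q ^ 2)"
  define n1 where "n1 = (\<lambda>q. s q * u1 q)"
  define n2 where "n2 = (\<lambda>q. s q * v1 q)"
  define n3 where "n3 = (\<lambda>q. s q * w1 q)"
  have nl: "nonlin K P = (n1, n2, n3)"
    by (simp add: nonlin_def Let_def n1_def n2_def n3_def s_def u1_def v1_def w1_def)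
  have "1/4 * vnormpN K 4 (gradN K P) ^ 4 - 1/4 * vnormpN K 4 (gradN K C) ^ 4
      = hN K ^ 3 * (\<Sum>q\<in>cell K. (u1 q^2+v1 q^2+w1 q^2)^2/4 - (u0 q^2+v0 q^2+w0 q^2)^2/4)"
    by (simp add: gradN_def vnorm4 u1_def v1_def w1_def u0_def v0_def w0_def sum_subtractf sum_divide_distrib algebra_simps)
  also have "\<dots> \<le> hN K ^ 3 * (\<Sum>q\<in>cell K. (u1 q^2+v1 q^2+w1 q^2) * (u1 q * (u1 q-u0 q) + v1 q * (v1 q-v0 q) + w1 q * (w1 q-w0 q)))"
    by (rule mult_left_mono[OF sum_mono[OF quartic_pw]]) (simp add: hN_def gN_def)
  also have "\<dots> = hN K ^ 3 * (\<Sum>q\<in>cell K. n1 q * u1 q - n1 q * u0 q + n2 q * v1 q - n2 q * v0 q + n3 q * w1 q - n3 q * w0 q)"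
    by (rule arg_cong[where f = "\<lambda>x. hN K ^ 3 * x"], rule sum.cong) (simp_all add: n1_def n2_def n3_def s_def algebra_simps)
  also have "\<dots> = ipN K n1 u1 - ipN K n1 u0 + ipN K n2 v1 - ipN K n2 v0 + ipN K n3 w1 - ipN K n3 w0"
    unfolding ipN_def by (simp only: sum_subtractf sum.distrib right_diff_distrib distrib_left)
  also have "\<dots> = (\<Sum>\<xi>\<in>freqs K. Re (- dft_coeff K (divN K (nonlin K P)) \<xi> * cnj (dft_coeff K P \<xi> - dft_coeff K C \<xi>)))"
    unfolding parseval_re sum_subtractf[symmetric] sum.distrib[symmetric]
  proof (rule sum_cong3)
    fix l m n assume fr: "(l, m, n) \<in> freqs K"
    let ?X = "dft_coeff K P (l, m, n)" and ?Y = "dft_coeff K C (l, m, n)"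
    have dv: "dft_coeff K (divN K (nonlin K P)) (l, m, n) =
       2 * complex_of_real pi * \<i> * of_int l * dft_coeff K n1 (l, m, n)
     + 2 * complex_of_real pi * \<i> * of_int m * dft_coeff K n2 (l, m, n)
     + 2 * complex_of_real pi * \<i> * of_int n * dft_coeff K n3 (l, m, n)"
      unfolding nl divN_def using fr by (simp add: dft_add dft_Dx dft_Dy dft_Dz)
    show "Re (dft_coeff K n1 (l, m, n) * cnj (dft_coeff K u1 (l, m, n))) -
          Re (dft_coeff K n1 (l, m, n) * cnj (dft_coeff K u0 (l, m, n))) +
          Re (dft_coeff K n2 (l, m, n) * cnj (dft_coeff K v1 (l, m, n))) -
          Re (dft_coeff K n2 (l, m, n) * cnj (dft_coeff K v0 (l, m, n))) +
          Re (dft_coeff K n3 (l, m, n) * cnj (dft_coeff K w1 (l, m, n))) -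
          Re (dft_coeff K n3 (l, m, n) * cnj (dft_coeff K w0 (l, m, n))) =
          Re (- dft_coeff K (divN K (nonlin K P)) (l, m, n) * cnj (?X - ?Y))"
      unfolding dv u1_def v1_def w1_def u0_def v0_def w0_def using fr
      apply (simp only: dft_Dx dft_Dy dft_Dz)
      using cnj_skew[OF cnj_Dsym[of l], of "dft_coeff K n1 (l, m, n)" ?X ?Y]
            cnj_skew[OF cnj_Dsym[of m], of "dft_coeff K n2 (l, m, n)" ?X ?Y]
            cnj_skew[OF cnj_Dsym[of n], of "dft_coeff K n3 (l, m, n)" ?X ?Y]
      by (simp only: distrib_right minus_add_distrib plus_complex.sel)
  qed
  finally show ?thesis .
qed


lemma lam_neg: "- 4 * pi\<^sup>2 * real_of_int (l\<^sup>2 + m\<^sup>2 + n\<^sup>2) = - lam (l, m, n)"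
  by (simp add: lam_def)

lemma mode1_cplx:
  fixes X Y Z Wd :: complex and L dt A a :: real
  assumes L: "L \<ge> 2" and dt: "dt > 0" and A: "A \<ge> 0" and a: "a \<ge> 0"
    and eq: "(complex_of_real (3/2) * X - complex_of_real 2 * Y + complex_of_real (1/2) * Z) / complex_of_real dt =
      complex_of_real (- L) * (- Wd + complex_of_real a * X + complex_of_real 2 * (complex_of_real (- L) * (complex_of_real 2 * Y - Z))
        - complex_of_real (A * dt) * (complex_of_real (- L) * (X - Y)) + complex_of_real (- L) * (complex_of_real (- L) * X))"
  shows "a/2 * (cmod X)^2 - a/2 * (cmod Y)^2 - L * (cmod X)^2 + L * (cmod Y)^2 + 1/2 * (L^2 * (cmod X)^2) - 1/2 * (L^2 * (cmod Y)^2)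
     + 1/(4*dt) * (1/L * (cmod (X - Y))^2) - 1/(4*dt) * (1/L * (cmod (Y - Z))^2) + L * (cmod (X - Y))^2 - L * (cmod (Y - Z))^2
     + Re (- Wd * cnj (X - Y)) \<le> 0"
proof -
  have eR: "(3/2*Re X - 2*Re Y + 1/2*Re Z)/dt = -L * (- Re Wd + a*Re X - 2*L*(2*Re Y - Re Z) + A*dt*L*(Re X-Re Y) + L*L*Re X)"
    using arg_cong[OF eq, of Re] by (simp add: algebra_simps)
  have eI: "(3/2*Im X - 2*Im Y + 1/2*Im Z)/dt = -L * (- Im Wd + a*Im X - 2*L*(2*Im Y - Im Z) + A*dt*L*(Im X-Im Y) + L*L*Im X)"
    using arg_cong[OF eq, of Im] by (simp add: algebra_simps)
  note r1 = mode1_real[OF L dt A a eR]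
  note r2 = mode1_real[OF L dt A a eI]
  have "a/2 * (cmod X)^2 - a/2 * (cmod Y)^2 - L * (cmod X)^2 + L * (cmod Y)^2 + 1/2 * (L^2 * (cmod X)^2) - 1/2 * (L^2 * (cmod Y)^2)
     + 1/(4*dt) * (1/L * (cmod (X - Y))^2) - 1/(4*dt) * (1/L * (cmod (Y - Z))^2) + L * (cmod (X - Y))^2 - L * (cmod (Y - Z))^2
     + Re (- Wd * cnj (X - Y)) =
     (a/2*(Re X^2-Re Y^2) - L*(Re X^2-Re Y^2) + L^2/2*(Re X^2-Re Y^2) + 1/(4*dt)*(1/L)*((Re X-Re Y)^2-(Re Y-Re Z)^2)
         + L*((Re X-Re Y)^2-(Re Y-Re Z)^2) + (- Re Wd)*(Re X-Re Y))
   + (a/2*(Im X^2-Im Y^2) - L*(Im X^2-Im Y^2) + L^2/2*(Im X^2-Im Y^2) + 1/(4*dt)*(1/L)*((Im X-Im Y)^2-(Im Y-Im Z)^2)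
         + L*((Im X-Im Y)^2-(Im Y-Im Z)^2) + (- Im Wd)*(Im X-Im Y))"
    by (simp add: cmod_power2 algebra_simps)
  then show ?thesis using r1 r2 by linarith
qed

lemma mode2_cplx:
  fixes X Y Z Wd :: complex and L dt A a \<epsilon> :: real
  assumes L: "L > 0" and dt: "dt > 0" and A: "A \<ge> \<epsilon>^2/16" and e: "\<epsilon> > 0" and a: "a = 1 - \<epsilon>"
    and eq: "(complex_of_real (3/2) * X - complex_of_real 2 * Y + complex_of_real (1/2) * Z) / complex_of_real dt =
      complex_of_real (- L) * (- Wd - complex_of_real \<epsilon> * (complex_of_real 2 * Y - Z)
        - complex_of_real (A * dt) * (complex_of_real (- L) * (X - Y))
        + (X + complex_of_real 2 * (complex_of_real (- L) * X) + complex_of_real (- L) * (complex_of_real (- L) * X)))"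
  shows "a/2 * (cmod X)^2 - a/2 * (cmod Y)^2 - L * (cmod X)^2 + L * (cmod Y)^2 + 1/2 * (L^2 * (cmod X)^2) - 1/2 * (L^2 * (cmod Y)^2)
     + 1/(4*dt) * (1/L * (cmod (X - Y))^2) - 1/(4*dt) * (1/L * (cmod (Y - Z))^2) + \<epsilon>/2 * (cmod (X - Y))^2 - \<epsilon>/2 * (cmod (Y - Z))^2
     + Re (- Wd * cnj (X - Y)) \<le> 0"
proof -
  have eR: "(3/2*Re X - 2*Re Y + 1/2*Re Z)/dt = -L * (- Re Wd - \<epsilon>*(2*Re Y - Re Z) + A*dt*L*(Re X-Re Y) + (1-L)^2*Re X)"
    using arg_cong[OF eq, of Re] by (simp add: algebra_simps power2_eq_square)
  have eI: "(3/2*Im X - 2*Im Y + 1/2*Im Z)/dt = -L * (- Im Wd - \<epsilon>*(2*Im Y - Im Z) + A*dt*L*(Im X-Im Y) + (1-L)^2*Im X)"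
    using arg_cong[OF eq, of Im] by (simp add: algebra_simps power2_eq_square)
  note r1 = mode2_real[OF L dt A e a eR]
  note r2 = mode2_real[OF L dt A e a eI]
  have "a/2 * (cmod X)^2 - a/2 * (cmod Y)^2 - L * (cmod X)^2 + L * (cmod Y)^2 + 1/2 * (L^2 * (cmod X)^2) - 1/2 * (L^2 * (cmod Y)^2)
     + 1/(4*dt) * (1/L * (cmod (X - Y))^2) - 1/(4*dt) * (1/L * (cmod (Y - Z))^2) + \<epsilon>/2 * (cmod (X - Y))^2 - \<epsilon>/2 * (cmod (Y - Z))^2
     + Re (- Wd * cnj (X - Y)) =
     (a/2*(Re X^2-Re Y^2) - L*(Re X^2-Re Y^2) + L^2/2*(Re X^2-Re Y^2) + 1/(4*dt)*(1/L)*((Re X-Re Y)^2-(Re Y-Re Z)^2)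
         + \<epsilon>/2*((Re X-Re Y)^2-(Re Y-Re Z)^2) + (- Re Wd)*(Re X-Re Y))
   + (a/2*(Im X^2-Im Y^2) - L*(Im X^2-Im Y^2) + L^2/2*(Im X^2-Im Y^2) + 1/(4*dt)*(1/L)*((Im X-Im Y)^2-(Im Y-Im Z)^2)
         + \<epsilon>/2*((Im X-Im Y)^2-(Im Y-Im Z)^2) + (- Im Wd)*(Im X-Im Y))"
    by (simp add: cmod_power2 algebra_simps)
  then show ?thesis using r1 r2 by linarith
qed


lemma lam_ge2:
  assumes "(l, m, n) \<noteq> (0, 0, 0)"
  shows "lam (l, m, n) \<ge> 2"
proof -
  have "l^2 + m^2 + n^2 \<ge> (1::int)"
  proof -
    have "l^2 \<ge> 0" "m^2 \<ge> 0" "n^2 \<ge> 0" by simp_all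
    moreover have "l^2 > 0 \<or> m^2 > 0 \<or> n^2 > 0" using assms by auto
    ultimately show ?thesis by linarith
  qed
  then have "real_of_int (l^2 + m^2 + n^2) \<ge> 1" by linarith
  moreover have "pi^2 \<ge> 2^2" using pi_ge_two by (rule power_mono) simp
  ultimately have "4 * pi^2 * real_of_int (l^2 + m^2 + n^2) \<ge> 4 * 4 * 1"
    by (intro mult_mono) auto
  then show ?thesis by (simp add: lam_def)
qed

lemma zero_freqs: "(0, 0, 0) \<in> freqs K" by (simp add: freqs_def)

theorem theorem3p2:
  fixes K :: nat and \<epsilon> a A dt :: real and \<phi> :: "int \<Rightarrow> grid" and sch :: nat
  assumes dt_pos: "dt > 0"
    and eps: "0 < \<epsilon>" "\<epsilon> < 1"
    and a_def: "a = 1 - \<epsilon>"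
    and A_bound: "A \<ge> \<epsilon> ^ 2 / 16"
    and per: "\<And>k. k \<ge> -1 \<Longrightarrow> periodic_grid K (\<phi> k)"
    and mean: "meanN K (\<phi> (-1)) = meanN K (\<phi> 0)"
    and sch: "sch = 1 \<or> sch = 2"
    and scheme: "\<And>k q. k \<ge> 0 \<Longrightarrow>
       (3/2 * \<phi> (k+1) q - 2 * \<phi> k q + 1/2 * \<phi> (k-1) q) / dt =
       lapN K (if sch = 1 then mu1 K a A dt (\<phi> (k+1)) (\<phi> k) (\<phi> (k-1))
               else mu2 K \<epsilon> A dt (\<phi> (k+1)) (\<phi> k) (\<phi> (k-1))) q"
    and k1: "k \<ge> 1"
  shows "(if sch = 1
          then mod_energy1 K a dt (\<phi> (k+1)) (\<phi> k) \<le> mod_energy1 K a dt (\<phi> k) (\<phi> (k-1))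
          else mod_energy2 K a \<epsilon> dt (\<phi> (k+1)) (\<phi> k) \<le> mod_energy2 K a \<epsilon> dt (\<phi> k) (\<phi> (k-1)))"
proof -
  let ?M = "\<lambda>j. (if sch = 1 then mu1 K a A dt (\<phi> (j+1)) (\<phi> j) (\<phi> (j-1))
               else mu2 K \<epsilon> A dt (\<phi> (j+1)) (\<phi> j) (\<phi> (j-1)))"
  have fun_eq: "(\<lambda>q. (3/2 * \<phi> (j+1) q - 2 * \<phi> j q + 1/2 * \<phi> (j-1) q) / dt) = lapN K (?M j)"
    if "j \<ge> 0" for j
    using scheme[OF that] by (intro ext) simp
  have dft_eq: "(complex_of_real (3/2) * dft_coeff K (\<phi> (j+1)) (l, m, n) - complex_of_real 2 * dft_coeff K (\<phi> j) (l, m, n)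
       + complex_of_real (1/2) * dft_coeff K (\<phi> (j-1)) (l, m, n)) / complex_of_real dt
     = complex_of_real (- lam (l, m, n)) * dft_coeff K (?M j) (l, m, n)"
    if "j \<ge> 0" "(l, m, n) \<in> freqs K" for j l m n
  proof -
    have "dft_coeff K (\<lambda>q. (3/2 * \<phi> (j+1) q - 2 * \<phi> j q + 1/2 * \<phi> (j-1) q) / dt) (l, m, n)
        = dft_coeff K (lapN K (?M j)) (l, m, n)" by (simp only: fun_eq[OF that(1)])
    then show ?thesis by (simp only: dft_lin dft_lap[OF that(2)] lam_neg)
  qed
  define mm where "mm = (\<lambda>j. dft_coeff K (\<phi> j) (0, 0, 0))"
  have mcons: "mm (int n) = mm (int n - 1)" for n :: nat
  proof (induction n)
    case 0
    then show ?case using mean by (simp add: mm_def dft_zero_mean)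
  next
    case (Suc n)
    have "(complex_of_real (3/2) * mm (int n + 1) - complex_of_real 2 * mm (int n)
       + complex_of_real (1/2) * mm (int n - 1)) / complex_of_real dt = 0"
      using dft_eq[of "int n" 0 0 0, OF _ zero_freqs] by (simp add: mm_def lam_def)
    then have "3/2 * mm (int n + 1) - 2 * mm (int n) + 1/2 * mm (int n - 1) = 0"
      using dt_pos by simp
    then show ?case using Suc.IH by (simp add: algebra_simps)
  qed
  have kk: "mm (k + 1) = mm k"
    using mcons[of "nat k + 1"] k1 by (simp add: add.commute)
  define P where "P = \<phi> (k+1)"
  define C where "C = \<phi> k"
  define Pm where "Pm = \<phi> (k-1)"
  define X where "X = dft_coeff K P"
  define Y where "Y = dft_coeff K C"
  define Z where "Z = dft_coeff K Pm"
  define Wd where "Wd = dft_coeff K (divN K (nonlin K P))"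
  have X0: "X (0, 0, 0) = Y (0, 0, 0)" using kk by (simp add: X_def Y_def P_def C_def mm_def)
  have NB: "1/4 * vnormpN K 4 (gradN K P) ^ 4 - 1/4 * vnormpN K 4 (gradN K C) ^ 4
      \<le> (\<Sum>\<xi>\<in>freqs K. Re (- Wd \<xi> * cnj (X \<xi> - Y \<xi>)))"
    unfolding Wd_def X_def Y_def by (rule nonlin_bound)
  have nP: "normpN K 2 P ^ 2 = (\<Sum>\<xi>\<in>freqs K. (cmod (X \<xi>))^2)" unfolding X_def by (rule norm_sq_fourier)
  have nC: "normpN K 2 C ^ 2 = (\<Sum>\<xi>\<in>freqs K. (cmod (Y \<xi>))^2)" unfolding Y_def by (rule norm_sq_fourier)
  have gP: "vnormpN K 2 (gradN K P) ^ 2 = (\<Sum>\<xi>\<in>freqs K. lam \<xi> * (cmod (X \<xi>))^2)" unfolding X_def by (rule grad_sq_fourier)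
  have gC: "vnormpN K 2 (gradN K C) ^ 2 = (\<Sum>\<xi>\<in>freqs K. lam \<xi> * (cmod (Y \<xi>))^2)" unfolding Y_def by (rule grad_sq_fourier)
  have lP: "normpN K 2 (lapN K P) ^ 2 = (\<Sum>\<xi>\<in>freqs K. (lam \<xi>)^2 * (cmod (X \<xi>))^2)" unfolding X_def by (rule lap_sq_fourier)
  have lC: "normpN K 2 (lapN K C) ^ 2 = (\<Sum>\<xi>\<in>freqs K. (lam \<xi>)^2 * (cmod (Y \<xi>))^2)" unfolding Y_def by (rule lap_sq_fourier)
  have hD: "hm1normN K (\<lambda>r. P r - C r) ^ 2 = (\<Sum>\<xi>\<in>freqs K. iota \<xi> * (cmod (X \<xi> - Y \<xi>))^2)"
    unfolding X_def Y_def hm1_sq_fourier by (simp only: dft_diff)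
  have hD0: "hm1normN K (\<lambda>r. C r - Pm r) ^ 2 = (\<Sum>\<xi>\<in>freqs K. iota \<xi> * (cmod (Y \<xi> - Z \<xi>))^2)"
    unfolding Z_def Y_def hm1_sq_fourier by (simp only: dft_diff)
  have gD: "vnormpN K 2 (gradN K (\<lambda>r. P r - C r)) ^ 2 = (\<Sum>\<xi>\<in>freqs K. lam \<xi> * (cmod (X \<xi> - Y \<xi>))^2)"
    unfolding X_def Y_def grad_sq_fourier by (simp only: dft_diff)
  have gD0: "vnormpN K 2 (gradN K (\<lambda>r. C r - Pm r)) ^ 2 = (\<Sum>\<xi>\<in>freqs K. lam \<xi> * (cmod (Y \<xi> - Z \<xi>))^2)"
    unfolding Z_def Y_def grad_sq_fourier by (simp only: dft_diff)
  have nD: "normpN K 2 (\<lambda>r. P r - C r) ^ 2 = (\<Sum>\<xi>\<in>freqs K. (cmod (X \<xi> - Y \<xi>))^2)"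
    unfolding X_def Y_def norm_sq_fourier by (simp only: dft_diff)
  have nD0: "normpN K 2 (\<lambda>r. C r - Pm r) ^ 2 = (\<Sum>\<xi>\<in>freqs K. (cmod (Y \<xi> - Z \<xi>))^2)"
    unfolding Z_def Y_def norm_sq_fourier by (simp only: dft_diff)
  have kpos: "k \<ge> 0" using k1 by simp
  have kk1: "k - 1 + 1 = k" by simp
  show ?thesis
  proof (cases "sch = 1")
    case True
    define g where "g = (\<lambda>\<xi>. a/2 * (cmod (X \<xi>))^2 - a/2 * (cmod (Y \<xi>))^2 - lam \<xi> * (cmod (X \<xi>))^2 + lam \<xi> * (cmod (Y \<xi>))^2
       + 1/2 * ((lam \<xi>)^2 * (cmod (X \<xi>))^2) - 1/2 * ((lam \<xi>)^2 * (cmod (Y \<xi>))^2)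
       + 1/(4*dt) * (iota \<xi> * (cmod (X \<xi> - Y \<xi>))^2) - 1/(4*dt) * (iota \<xi> * (cmod (Y \<xi> - Z \<xi>))^2)
       + lam \<xi> * (cmod (X \<xi> - Y \<xi>))^2 - lam \<xi> * (cmod (Y \<xi> - Z \<xi>))^2
       + Re (- Wd \<xi> * cnj (X \<xi> - Y \<xi>)))"
    have gle: "g \<xi> \<le> 0" if "\<xi> \<in> freqs K" for \<xi>
    proof -
      obtain l m n where xi: "\<xi> = (l, m, n)" by (cases \<xi>) auto
      show ?thesis
      proof (cases "\<xi> = (0, 0, 0)")
        case True
        then show ?thesis using X0 by (simp add: g_def iota_def lam_def)
      next
        case False
        have L: "lam \<xi> \<ge> 2" using False lam_ge2 xi by simp
        have eq: "(complex_of_real (3/2) * X \<xi> - complex_of_real 2 * Y \<xi> + complex_of_real (1/2) * Z \<xi>) / complex_of_real dt =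
          complex_of_real (- lam \<xi>) * (- Wd \<xi> + complex_of_real a * X \<xi> + complex_of_real 2 * (complex_of_real (- lam \<xi>) * (complex_of_real 2 * Y \<xi> - Z \<xi>))
           - complex_of_real (A * dt) * (complex_of_real (- lam \<xi>) * (X \<xi> - Y \<xi>)) + complex_of_real (- lam \<xi>) * (complex_of_real (- lam \<xi>) * X \<xi>))"
          using dft_eq[OF kpos that[unfolded xi]] True
          by (simp only: xi X_def Y_def Z_def Wd_def P_def C_def Pm_def mu1_def dft_lin dft_lap[OF that[unfolded xi]] lam_neg if_True simp_thms)
        have "\<epsilon>^2/16 \<ge> 0" by simp
        then have A0: "A \<ge> 0" using A_bound by linarith
        have a0: "a \<ge> 0" using a_def eps by simp
        have io: "iota \<xi> = 1 / lam \<xi>" using False by (simp add: iota_def)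
        show ?thesis unfolding g_def io by (rule mode1_cplx[OF L dt_pos A0 a0 eq])
      qed
    qed
    have "(\<Sum>\<xi>\<in>freqs K. g \<xi>) \<le> 0" by (rule sum_nonpos) (simp add: gle)
    moreover have "(\<Sum>\<xi>\<in>freqs K. g \<xi>) =
        a/2 * (\<Sum>\<xi>\<in>freqs K. (cmod (X \<xi>))^2) - a/2 * (\<Sum>\<xi>\<in>freqs K. (cmod (Y \<xi>))^2)
      - (\<Sum>\<xi>\<in>freqs K. lam \<xi> * (cmod (X \<xi>))^2) + (\<Sum>\<xi>\<in>freqs K. lam \<xi> * (cmod (Y \<xi>))^2)
      + 1/2 * (\<Sum>\<xi>\<in>freqs K. (lam \<xi>)^2 * (cmod (X \<xi>))^2) - 1/2 * (\<Sum>\<xi>\<in>freqs K. (lam \<xi>)^2 * (cmod (Y \<xi>))^2)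
      + 1/(4*dt) * (\<Sum>\<xi>\<in>freqs K. iota \<xi> * (cmod (X \<xi> - Y \<xi>))^2) - 1/(4*dt) * (\<Sum>\<xi>\<in>freqs K. iota \<xi> * (cmod (Y \<xi> - Z \<xi>))^2)
      + (\<Sum>\<xi>\<in>freqs K. lam \<xi> * (cmod (X \<xi> - Y \<xi>))^2) - (\<Sum>\<xi>\<in>freqs K. lam \<xi> * (cmod (Y \<xi> - Z \<xi>))^2)
      + (\<Sum>\<xi>\<in>freqs K. Re (- Wd \<xi> * cnj (X \<xi> - Y \<xi>)))"
      unfolding g_def by (simp only: sum.distrib sum_subtractf sum_distrib_left[symmetric])
    ultimately have "mod_energy1 K a dt P C \<le> mod_energy1 K a dt C Pm"
      unfolding mod_energy1_def energyN_def nP nC gP gC lP lC hD hD0 gD gD0 using NB by linarith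
    then show ?thesis using True by (simp add: P_def C_def Pm_def)
  next
    case False
    note sch2 = False
    define g where "g = (\<lambda>\<xi>. a/2 * (cmod (X \<xi>))^2 - a/2 * (cmod (Y \<xi>))^2 - lam \<xi> * (cmod (X \<xi>))^2 + lam \<xi> * (cmod (Y \<xi>))^2
       + 1/2 * ((lam \<xi>)^2 * (cmod (X \<xi>))^2) - 1/2 * ((lam \<xi>)^2 * (cmod (Y \<xi>))^2)
       + 1/(4*dt) * (iota \<xi> * (cmod (X \<xi> - Y \<xi>))^2) - 1/(4*dt) * (iota \<xi> * (cmod (Y \<xi> - Z \<xi>))^2)
       + \<epsilon>/2 * (cmod (X \<xi> - Y \<xi>))^2 - \<epsilon>/2 * (cmod (Y \<xi> - Z \<xi>))^2
       + Re (- Wd \<xi> * cnj (X \<xi> - Y \<xi>)))"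
    have gle: "g \<xi> \<le> 0" if "\<xi> \<in> freqs K" for \<xi>
    proof -
      obtain l m n where xi: "\<xi> = (l, m, n)" by (cases \<xi>) auto
      show ?thesis
      proof (cases "\<xi> = (0, 0, 0)")
        case True
        then show ?thesis using X0 eps by (simp add: g_def iota_def lam_def)
      next
        case False
        have L: "lam \<xi> > 0" using False lam_ge2 xi by (smt (verit))
        have eq: "(complex_of_real (3/2) * X \<xi> - complex_of_real 2 * Y \<xi> + complex_of_real (1/2) * Z \<xi>) / complex_of_real dt =
          complex_of_real (- lam \<xi>) * (- Wd \<xi> - complex_of_real \<epsilon> * (complex_of_real 2 * Y \<xi> - Z \<xi>)
           - complex_of_real (A * dt) * (complex_of_real (- lam \<xi>) * (X \<xi> - Y \<xi>))
           + (X \<xi> + complex_of_real 2 * (complex_of_real (- lam \<xi>) * X \<xi>) + complex_of_real (- lam \<xi>) * (complex_of_real (- lam \<xi>) * X \<xi>)))"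
          using dft_eq[OF kpos that[unfolded xi]] sch2
          by (simp only: xi X_def Y_def Z_def Wd_def P_def C_def Pm_def mu2_def dft_lin dft_lap[OF that[unfolded xi]] lam_neg if_False)
        have io: "iota \<xi> = 1 / lam \<xi>" using False by (simp add: iota_def)
        show ?thesis unfolding g_def io by (rule mode2_cplx[OF L dt_pos A_bound eps(1) a_def eq])
      qed
    qed
    have "(\<Sum>\<xi>\<in>freqs K. g \<xi>) \<le> 0" by (rule sum_nonpos) (simp add: gle)
    moreover have "(\<Sum>\<xi>\<in>freqs K. g \<xi>) =
        a/2 * (\<Sum>\<xi>\<in>freqs K. (cmod (X \<xi>))^2) - a/2 * (\<Sum>\<xi>\<in>freqs K. (cmod (Y \<xi>))^2)
      - (\<Sum>\<xi>\<in>freqs K. lam \<xi> * (cmod (X \<xi>))^2) + (\<Sum>\<xi>\<in>freqs K. lam \<xi> * (cmod (Y \<xi>))^2)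
      + 1/2 * (\<Sum>\<xi>\<in>freqs K. (lam \<xi>)^2 * (cmod (X \<xi>))^2) - 1/2 * (\<Sum>\<xi>\<in>freqs K. (lam \<xi>)^2 * (cmod (Y \<xi>))^2)
      + 1/(4*dt) * (\<Sum>\<xi>\<in>freqs K. iota \<xi> * (cmod (X \<xi> - Y \<xi>))^2) - 1/(4*dt) * (\<Sum>\<xi>\<in>freqs K. iota \<xi> * (cmod (Y \<xi> - Z \<xi>))^2)
      + \<epsilon>/2 * (\<Sum>\<xi>\<in>freqs K. (cmod (X \<xi> - Y \<xi>))^2) - \<epsilon>/2 * (\<Sum>\<xi>\<in>freqs K. (cmod (Y \<xi> - Z \<xi>))^2)
      + (\<Sum>\<xi>\<in>freqs K. Re (- Wd \<xi> * cnj (X \<xi> - Y \<xi>)))"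
      unfolding g_def by (simp only: sum.distrib sum_subtractf sum_distrib_left[symmetric])
    ultimately have "mod_energy2 K a \<epsilon> dt P C \<le> mod_energy2 K a \<epsilon> dt C Pm"
      unfolding mod_energy2_def energyN_def nP nC gP gC lP lC hD hD0 nD nD0 using NB by linarith
    then show ?thesis using False by (simp add: P_def C_def Pm_def)
  qed
qed

end
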